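(* Assume $\|\cdot\|=|||\cdot|||=\|\cdot\|_2$. Then: (a) For $L_1,L_2\in\mathrm{Gr}(V,m)$, $\|\Pi_{L_1}-\Pi_{L_2}\|_2=\operatorname{dist}(L_1,L_2)=\overline{\operatorname{dist}}(L_1,L_2)$, where $\Pi_{L_i}$ is the orthogonal projection onto $L_i$ and $\|\Pi_{L_1}-\Pi_{L_2}\|_2=\max_{\|x\|_2=1}\|(\Pi_{L_1}-\Pi_{L_2})x\|_2$. (b) If $L\in\mathrm{Gr}(V,m)$ and $L\cap\operatorname{int}(K)\neq\emptyset$, then $\nu(L)=\sin\angle(L^\perp,K^* )$. (c) If $L\in\mathrm{Gr}(V,m)$ and $L^\perp\cap\operatorname{int}(K^* )\neq\emptyset$, then $\bar\nu(L)=\sin\angle(L,K)$.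
   Context: $V$ is a finite-dimensional real vector space with inner product $\langle\cdot,\cdot\rangle$ and Euclidean norm $\|v\|_2=\sqrt{\langle v,v\rangle}$; $K\subseteq V$ is a regular closed convex cone with dual cone $K^*:=\{u:\langle u,x\rangle\ge0\ \forall x\in K\}$; $\mathrm{Gr}(V,m)$ is the set of $m$-dimensional subspaces ($1\le m<\dim V$), $L^\perp$ the orthogonal complement. With norms $\|\cdot\|,|||\cdot|||$ on $V$ (dual norms $\|u\|^*:=\max_{\|x\|=1}\langle u,x\rangle$, similarly $|||\cdot|||^*$): $\operatorname{dist}(L_1,L_2):=\max_{x\in L_1,x\neq0}\min_{v\in L_2}\frac{|||x-v|||}{\|x\|}$, $\overline{\operatorname{dist}}(L_1,L_2):=\max_{x\in L_1,x\neq0}\inf_{v\in L_2,v\neq0}\frac{|||x-v|||}{\|v\|}$, $\nu(L):=\min\{\|y-u\|^*:u\in K^*,y\in L^\perp,|||u|||^*=1\}$, $\bar\nu(L):=\min\{|||v-x|||:v\in K,x\in L,\|x\|=1\}$. For $x,y\neq0$, $\angle(x,y):=\arccos\frac{\langle x,y\rangle}{\|x\|_2\|y\|_2}\in[0,\pi]$; for a linear subspace $L$ and closed convex cone $C$, $\angle(L,C):=\min\{\angle(x,v):x\in L\setminus\{0\},v\in C\setminus\{0\}\}$. *)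

theory Defs
  imports "HOL-Analysis.Analysis"
begin

definition regular_cone :: "'a::euclidean_space set \<Rightarrow> bool" where
  "regular_cone K \<longleftrightarrow> closed K \<and> convex K \<and> cone K \<and> interior K \<noteq> {}
     \<and> K \<inter> uminus ` K = {0}"

definition dual_cone :: "'a::euclidean_space set \<Rightarrow> 'a set" where
  "dual_cone K = {u. \<forall>x\<in>K. 0 \<le> inner u x}"

definition Gr :: "nat \<Rightarrow> 'a::euclidean_space set set" where
  "Gr m = {L. subspace L \<and> dim L = m}"

definition dual_norm :: "('a::euclidean_space \<Rightarrow> real) \<Rightarrow> 'a \<Rightarrow> real" where
  "dual_norm N u = Sup {inner u x | x. N x = 1}"

text \<open>dist(L1,L2) with norms N (= \<parallel>.\<parallel>) and M (= |||.|||).\<close>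
definition sdist :: "('a::euclidean_space \<Rightarrow> real) \<Rightarrow> ('a \<Rightarrow> real) \<Rightarrow> 'a set \<Rightarrow> 'a set \<Rightarrow> real" where
  "sdist N M L1 L2 = Sup ((\<lambda>x. Inf ((\<lambda>v. M (x - v) / N x) ` L2)) ` (L1 - {0}))"

definition sdist_bar :: "('a::euclidean_space \<Rightarrow> real) \<Rightarrow> ('a \<Rightarrow> real) \<Rightarrow> 'a set \<Rightarrow> 'a set \<Rightarrow> real" where
  "sdist_bar N M L1 L2 = Sup ((\<lambda>x. Inf ((\<lambda>v. M (x - v) / N v) ` (L2 - {0}))) ` (L1 - {0}))"

definition nu :: "('a::euclidean_space \<Rightarrow> real) \<Rightarrow> ('a \<Rightarrow> real) \<Rightarrow> 'a set \<Rightarrow> 'a set \<Rightarrow> real" where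
  "nu N M K L = Inf {dual_norm N (y - u) | u y. u \<in> dual_cone K \<and> y \<in> orthogonal_comp L \<and> dual_norm M u = 1}"

definition nu_bar :: "('a::euclidean_space \<Rightarrow> real) \<Rightarrow> ('a \<Rightarrow> real) \<Rightarrow> 'a set \<Rightarrow> 'a set \<Rightarrow> real" where
  "nu_bar N M K L = Inf {M (v - x) | v x. v \<in> K \<and> x \<in> L \<and> N x = 1}"

definition vec_angle :: "'a::euclidean_space \<Rightarrow> 'a \<Rightarrow> real" where
  "vec_angle x y = arccos (inner x y / (norm x * norm y))"

definition sub_cone_angle :: "'a::euclidean_space set \<Rightarrow> 'a set \<Rightarrow> real" where
  "sub_cone_angle L C = Inf {vec_angle x v | x v. x \<in> L - {0} \<and> v \<in> C - {0}}"

definition orth_proj :: "'a::euclidean_space set \<Rightarrow> 'a \<Rightarrow> 'a" where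
  "orth_proj L x = (THE p. p \<in> L \<and> (\<forall>y\<in>L. inner (x - p) y = 0))"

definition op_norm2 :: "('a::euclidean_space \<Rightarrow> 'a) \<Rightarrow> real" where
  "op_norm2 f = Sup {norm (f x) | x. norm x = 1}"

end

theory Submission imports Defs begin

lemma proj_ex:
  fixes L :: "'a::euclidean_space set"
  assumes "subspace L"
  shows "\<exists>!p. p \<in> L \<and> (\<forall>y\<in>L. inner (x - p) y = 0)"
proof -
  obtain y z where "y \<in> span L" "\<And>w. w \<in> span L \<Longrightarrow> orthogonal z w" "x = y + z"
    using orthogonal_subspace_decomp_exists by blast
  moreover have "span L = L" using assms by simp
  ultimately have ex: "y \<in> L \<and> (\<forall>w\<in>L. inner (x - y) w = 0)"
    by (auto simp: orthogonal_def)
  show ?thesis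
  proof (rule ex1I[of _ y])
    show "y \<in> L \<and> (\<forall>w\<in>L. inner (x - y) w = 0)" by (rule ex)
  next
    fix q assume q: "q \<in> L \<and> (\<forall>w\<in>L. inner (x - q) w = 0)"
    have d: "y - q \<in> L" using q ex assms by (simp add: subspace_diff)
    have "inner (x - q) (y - q) = 0" "inner (x - y) (y - q) = 0" using q ex d by auto
    then have "inner (y - q) (y - q) = 0" by (simp add: inner_diff_left inner_diff_right inner_commute)
    then show "q = y" by simp
  qed
qed

lemma proj_props:
  fixes L :: "'a::euclidean_space set"
  assumes "subspace L"
  shows "orth_proj L x \<in> L" "y \<in> L \<Longrightarrow> inner (x - orth_proj L x) y = 0"
  using theI'[OF proj_ex[OF assms, of x]] unfolding orth_proj_def by auto

lemma proj_eq:
  fixes L :: "'a::euclidean_space set"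
  assumes "subspace L" "p \<in> L" "\<forall>y\<in>L. inner (x - p) y = 0"
  shows "orth_proj L x = p"
  unfolding orth_proj_def
proof (rule the1_equality)
  show "\<exists>!p. p \<in> L \<and> (\<forall>y\<in>L. inner (x - p) y = 0)" by (rule proj_ex[OF assms(1)])
qed (use assms in auto)

lemma proj_id:
  fixes L :: "'a::euclidean_space set"
  assumes "subspace L" "x \<in> L" shows "orth_proj L x = x"
  using proj_eq[OF assms(1,2)] by simp

lemma proj_linear:
  fixes L :: "'a::euclidean_space set"
  assumes "subspace L" shows "linear (orth_proj L)"
proof (rule linearI)
  fix x y
  show "orth_proj L (x + y) = orth_proj L x + orth_proj L y"
  proof (rule proj_eq[OF assms])
    show "orth_proj L x + orth_proj L y \<in> L" by (simp add: assms proj_props(1) subspace_add)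
    show "\<forall>w\<in>L. inner (x + y - (orth_proj L x + orth_proj L y)) w = 0"
    proof
      fix w assume "w \<in> L"
      then have "inner (x - orth_proj L x) w = 0" "inner (y - orth_proj L y) w = 0" using proj_props(2)[OF assms] by auto
      then show "inner (x + y - (orth_proj L x + orth_proj L y)) w = 0" by (simp add: inner_diff_left inner_add_left)
    qed
  qed
next
  fix c :: real and x
  show "orth_proj L (c *\<^sub>R x) = c *\<^sub>R orth_proj L x"
  proof (rule proj_eq[OF assms])
    show "c *\<^sub>R orth_proj L x \<in> L" by (simp add: assms proj_props(1) subspace_scale)
    show "\<forall>y\<in>L. inner (c *\<^sub>R x - c *\<^sub>R orth_proj L x) y = 0"
      using proj_props(2)[OF assms, of _ x]
      by (metis inner_scaleR_left mult_zero_right scaleR_right_diff_distrib)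
  qed
qed

lemma proj_pyth:
  fixes L :: "'a::euclidean_space set"
  assumes "subspace L"
  shows "(norm x)\<^sup>2 = (norm (orth_proj L x))\<^sup>2 + (norm (x - orth_proj L x))\<^sup>2"
proof -
  have "inner (x - orth_proj L x) (orth_proj L x) = 0" using proj_props[OF assms] by blast
  then have "inner (orth_proj L x) (x - orth_proj L x) = 0" by (simp add: inner_commute)
  then show ?thesis
    by (metis add_diff_cancel_left' diff_add_cancel norm_add_Pythagorean orthogonal_def)
qed

lemma proj_selfadj:
  fixes L :: "'a::euclidean_space set"
  assumes "subspace L"
  shows "inner (orth_proj L x) y = inner x (orth_proj L y)"
proof -
  have a: "inner (orth_proj L x) (y - orth_proj L y) = 0"
    using proj_props[OF assms] by (simp add: inner_commute)
  have b: "inner (x - orth_proj L x) (orth_proj L y) = 0"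
    using proj_props[OF assms] by simp
  from a b show ?thesis by (simp add: inner_diff_left inner_diff_right)
qed

lemma proj_best:
  fixes L :: "'a::euclidean_space set"
  assumes "subspace L" "v \<in> L"
  shows "norm (x - orth_proj L x) \<le> norm (x - v)"
proof -
  have "orth_proj L x - v \<in> L" by (simp add: assms proj_props(1) subspace_diff)
  then have "inner (x - orth_proj L x) (orth_proj L x - v) = 0" using proj_props[OF assms(1)] by blast
  then have "(norm (x - v))\<^sup>2 = (norm (x - orth_proj L x))\<^sup>2 + (norm (orth_proj L x - v))\<^sup>2"
    by (metis diff_add_cancel add_diff_eq norm_add_Pythagorean orthogonal_def)
  then have "(norm (x - orth_proj L x))\<^sup>2 \<le> (norm (x - v))\<^sup>2" by simp
  then show ?thesis by (simp add: power2_le_iff_abs_le)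
qed


lemma cos_bound:
  fixes x v :: "'a::euclidean_space"
  shows "\<bar>inner x v / (norm x * norm v)\<bar> \<le> 1"
proof (cases "x = 0 \<or> v = 0")
  case True then show ?thesis by (elim disjE) simp_all
next
  case False
  then have p: "0 < norm x * norm v" by simp
  have "\<bar>inner x v\<bar> \<le> norm x * norm v" by (rule Cauchy_Schwarz_ineq2)
  then have "\<bar>inner x v\<bar> / (norm x * norm v) \<le> 1" using p by simp
  then show ?thesis using p by (simp add: abs_divide)
qed

lemma angle_main:
  fixes P Q :: "'a::euclidean_space set"
  defines "C \<equiv> {inner x v / (norm x * norm v) | x v. x \<in> P - {0} \<and> v \<in> Q - {0}}"
  assumes sym: "\<And>x. x \<in> P \<Longrightarrow> -x \<in> P" and ne: "C \<noteq> {}"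
  shows "sin (Inf {vec_angle x v | x v. x \<in> P - {0} \<and> v \<in> Q - {0}}) = sqrt (1 - (Sup C)\<^sup>2)"
    and "\<And>c. c \<in> C \<Longrightarrow> \<bar>c\<bar> \<le> Sup C" "0 \<le> Sup C" "Sup C \<le> 1"
proof -
  have cb: "\<And>c. c \<in> C \<Longrightarrow> \<bar>c\<bar> \<le> 1" unfolding C_def using cos_bound by blast
  have bdd: "bdd_above C" using cb by (meson abs_le_D1 bdd_aboveI)
  have neg: "-c \<in> C" if "c \<in> C" for c
  proof -
    from that obtain x v where "x \<in> P - {0}" "v \<in> Q - {0}" "c = inner x v / (norm x * norm v)"
      unfolding C_def by blast
    then show ?thesis unfolding C_def using sym
      by (intro CollectI exI[of _ "-x"] exI[of _ v]) auto
  qed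
  show ab: "\<bar>c\<bar> \<le> Sup C" if "c \<in> C" for c
    using cSup_upper[OF that bdd] cSup_upper[OF neg[OF that] bdd] by linarith
  obtain c0 where c0: "c0 \<in> C" using ne by blast
  show S0: "0 \<le> Sup C" using ab[OF c0] by linarith
  show S1: "Sup C \<le> 1" using cb by (meson abs_le_D1 cSup_least ne)
  have A: "{vec_angle x v | x v. x \<in> P - {0} \<and> v \<in> Q - {0}} = arccos ` C"
    unfolding C_def vec_angle_def by blast
  define \<theta> where "\<theta> = Inf (arccos ` C)"
  have bddb: "bdd_below (arccos ` C)" using cb
    by (intro bdd_belowI[of _ 0]) (auto intro!: arccos_lbound simp: abs_le_iff)
  have le1: "arccos (Sup C) \<le> \<theta>" unfolding \<theta>_def
  proof (rule cInf_greatest)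
    show "arccos ` C \<noteq> {}" using ne by simp
    fix y assume "y \<in> arccos ` C"
    then obtain c where "c \<in> C" "y = arccos c" by blast
    then show "arccos (Sup C) \<le> y"
    proof -
      have "arccos (Sup C) \<le> arccos c"
        by (rule arccos_le_arccos) (use cSup_upper[OF \<open>c \<in> C\<close> bdd] cb[OF \<open>c\<in>C\<close>] S1 in \<open>auto simp: abs_le_iff\<close>)
      then show ?thesis using \<open>y = arccos c\<close> by simp
    qed
  qed
  have t0: "0 \<le> \<theta>" using le1 arccos_lbound[of "Sup C"] S0 S1 by linarith
  have tc: "\<theta> \<le> arccos c" if "c \<in> C" for c
    unfolding \<theta>_def using that bddb by (intro cInf_lower) auto
  have tpi: "\<theta> \<le> pi" using tc[OF c0] arccos_ubound[of c0] cb[OF c0] by (auto simp: abs_le_iff)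
  have "c \<le> cos \<theta>" if "c \<in> C" for c
  proof -
    have "cos (arccos c) \<le> cos \<theta>"
      using tc[OF that] t0 arccos_ubound[of c] cb[OF that] by (intro cos_monotone_0_pi_le) (auto simp: abs_le_iff)
    then show ?thesis using cb[OF that] by (simp add: abs_le_iff)
  qed
  then have "Sup C \<le> cos \<theta>" using ne by (intro cSup_least) auto
  then have "arccos (cos \<theta>) \<le> arccos (Sup C)"
    using S0 by (intro arccos_le_arccos) auto
  then have "\<theta> \<le> arccos (Sup C)" using arccos_cos[OF t0 tpi] by simp
  then have "\<theta> = arccos (Sup C)" using le1 by simp
  then show "sin (Inf {vec_angle x v | x v. x \<in> P - {0} \<and> v \<in> Q - {0}}) = sqrt (1 - (Sup C)\<^sup>2)"
    unfolding A \<theta>_def[symmetric] using S0 S1 by (simp add: sin_arccos)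
qed

lemma dist_lower:
  fixes z w :: "'a::euclidean_space"
  assumes "norm w = 1" "z = 0 \<or> \<bar>inner z w / norm z\<bar> \<le> S" "0 \<le> S" "S \<le> 1"
  shows "sqrt (1 - S\<^sup>2) \<le> norm (z - w)"
proof -
  have "1 - S\<^sup>2 \<le> (norm (z - w))\<^sup>2"
  proof (cases "z = 0")
    case True then show ?thesis using assms by simp
  next
    case False
    define c where "c = inner z w / norm z"
    have ic: "inner z w = c * norm z" using False by (simp add: c_def)
    have "(norm (z - w))\<^sup>2 = (norm z)\<^sup>2 - 2 * inner z w + 1"
      using dot_norm_neg[of z w] assms(1) by simp
    also have "\<dots> = (norm z - c)\<^sup>2 + 1 - c\<^sup>2" unfolding ic power2_eq_square by algebra
    finally have e: "(norm (z - w))\<^sup>2 = (norm z - c)\<^sup>2 + 1 - c\<^sup>2" .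
    have "\<bar>c\<bar> \<le> S" using assms(2) False by (simp add: c_def)
    then have "\<bar>c\<bar>\<^sup>2 \<le> S\<^sup>2" by (intro power_mono) auto
    then have "c\<^sup>2 \<le> S\<^sup>2" by simp
    have "0 \<le> (norm z - c)\<^sup>2" by simp
    then show ?thesis using e \<open>c\<^sup>2 \<le> S\<^sup>2\<close> by linarith
  qed
  then have "sqrt (1 - S\<^sup>2) \<le> sqrt ((norm (z - w))\<^sup>2)" by (rule real_sqrt_le_mono)
  then show ?thesis by simp
qed

lemma fin_upper:
  fixes C :: "real set"
  assumes ne: "C \<noteq> {}" and t0: "0 \<le> t" and up: "\<And>c. c \<in> C \<Longrightarrow> 0 \<le> c \<Longrightarrow> t \<le> sqrt (1 - c\<^sup>2)"
    and S0: "0 \<le> Sup C" and t1: "t \<le> 1" and cb: "\<And>c. c \<in> C \<Longrightarrow> \<bar>c\<bar> \<le> 1"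
  shows "t \<le> sqrt (1 - (Sup C)\<^sup>2)"
proof -
  have "c \<le> sqrt (1 - t\<^sup>2)" if "c \<in> C" for c
  proof (cases "0 \<le> c")
    case True
    have s0: "0 \<le> sqrt (1 - c\<^sup>2)" using up[OF that True] t0 by linarith
    then have "0 \<le> 1 - c\<^sup>2" by simp
    have "t\<^sup>2 \<le> (sqrt (1 - c\<^sup>2))\<^sup>2" using up[OF that True] t0 by (intro power_mono) auto
    then have "t\<^sup>2 \<le> 1 - c\<^sup>2" using \<open>0 \<le> 1 - c\<^sup>2\<close> by simp
    then show ?thesis by (intro real_le_rsqrt) simp
  next
    case False
    have "0 \<le> 1 - t\<^sup>2" using t0 t1 by (simp add: power_le_one)
    then show ?thesis using False by (smt (verit) real_sqrt_ge_zero)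
  qed
  then have "Sup C \<le> sqrt (1 - t\<^sup>2)" using ne by (intro cSup_least) auto
  then have "(Sup C)\<^sup>2 \<le> (sqrt (1 - t\<^sup>2))\<^sup>2" using S0 by (intro power_mono) auto
  moreover have "0 \<le> 1 - t\<^sup>2" using t0 t1 by (simp add: power_le_one)
  ultimately have "(Sup C)\<^sup>2 \<le> 1 - t\<^sup>2" by simp
  then show ?thesis by (intro real_le_rsqrt) simp
qed

lemma unit_calc:
  fixes a b :: "'a::euclidean_space"
  assumes "norm a = 1" "norm b = c" "inner b a = c * c"
  shows "norm (b - a) = sqrt (1 - c\<^sup>2)"
proof -
  have "(norm (b - a))\<^sup>2 = 1 - c\<^sup>2"
    using dot_norm_neg[of b a] assms by (simp add: power2_eq_square)
  then show ?thesis by (metis norm_ge_zero real_sqrt_unique)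
qed

lemma dual_norm_norm:
  fixes u :: "'a::euclidean_space"
  shows "dual_norm norm u = norm u"
proof -
  obtain b :: 'a where b: "b \<in> Basis" using nonempty_Basis by blast
  define x0 where "x0 = (if u = 0 then b else u /\<^sub>R norm u)"
  have nx0: "norm x0 = 1" using b by (simp add: x0_def)
  have ix0: "inner u x0 = norm u"
    by (cases "u = 0") (simp_all add: x0_def power2_norm_eq_inner[symmetric] power2_eq_square)
  show ?thesis unfolding dual_norm_def
  proof (rule cSup_eq_maximum)
    show "norm u \<in> {inner u x |x. norm x = 1}" using nx0 ix0 by force
    fix y assume "y \<in> {inner u x |x. norm x = 1}"
    then obtain x where "norm x = 1" "y = inner u x" by blast
    then show "y \<le> norm u" using norm_cauchy_schwarz[of u x] by simp
  qed
qed

lemma part_c: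
  fixes K L :: "'a::euclidean_space set"
  assumes cK: "cone K" and Kne: "K - {0} \<noteq> {}" and sL: "subspace L" and Lne: "L - {0} \<noteq> {}"
  shows "nu_bar norm norm K L = sin (sub_cone_angle L K)"
proof -
  define C where "C = {inner x v / (norm x * norm v) | x v. x \<in> L - {0} \<and> v \<in> K - {0}}"
  have sym: "\<And>x. x \<in> L \<Longrightarrow> -x \<in> L" using sL by (simp add: subspace_neg)
  have Cne: "C \<noteq> {}" using Kne Lne unfolding C_def by blast
  note AM = angle_main[of L K, OF sym Cne[unfolded C_def], folded C_def]
  have RHS: "sin (sub_cone_angle L K) = sqrt (1 - (Sup C)\<^sup>2)"
    unfolding sub_cone_angle_def using AM(1) .
  define N where "N = {norm (v - x) | v x. v \<in> K \<and> x \<in> L \<and> norm x = 1}"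
  have LHS: "nu_bar norm norm K L = Inf N" unfolding nu_bar_def N_def by simp
  obtain l where l: "l \<in> L" "l \<noteq> 0" using Lne by blast
  define x0 where "x0 = l /\<^sub>R norm l"
  have x0: "x0 \<in> L" "norm x0 = 1" using l sL by (auto simp: x0_def subspace_scale)
  obtain k where k: "k \<in> K" using Kne by blast
  have K0: "0 \<in> K" using cK k unfolding cone_def by (metis scaleR_zero_left order_refl)
  have n1: "1 \<in> N" unfolding N_def using x0 K0 by (intro CollectI exI[of _ 0] exI[of _ x0]) simp
  have Nne: "N \<noteq> {}" using n1 by blast
  have bddN: "bdd_below N" unfolding N_def by (intro bdd_belowI[of _ 0]) auto
  have t0: "0 \<le> Inf N" using Nne by (intro cInf_greatest) (auto simp: N_def)
  have t1: "Inf N \<le> 1" using cInf_lower[OF n1 bddN] .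
  have lower: "sqrt (1 - (Sup C)\<^sup>2) \<le> Inf N"
  proof (rule cInf_greatest[OF Nne])
    fix n assume "n \<in> N"
    then obtain v x where vx: "v \<in> K" "x \<in> L" "norm x = 1" "n = norm (v - x)" unfolding N_def by blast
    have "v = 0 \<or> \<bar>inner v x / norm v\<bar> \<le> Sup C"
    proof (cases "v = 0")
      case False
      have "inner x v / (norm x * norm v) \<in> C" unfolding C_def using vx False
        by (intro CollectI exI[of _ x] exI[of _ v]) auto
      then have "inner v x / norm v \<in> C" using vx by (simp add: inner_commute)
      then show ?thesis using AM(2) by blast
    qed simp
    then show "sqrt (1 - (Sup C)\<^sup>2) \<le> n" using dist_lower[of x v "Sup C"] vx AM(3,4) by simp
  qed
  have upper: "Inf N \<le> sqrt (1 - (Sup C)\<^sup>2)"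
  proof (rule fin_upper[OF Cne t0 _ AM(3) t1])
    show "\<And>c. c \<in> C \<Longrightarrow> \<bar>c\<bar> \<le> 1" using AM(2,4) by fastforce
    fix c assume "c \<in> C" "0 \<le> c"
    then obtain x v where xv: "x \<in> L" "x \<noteq> 0" "v \<in> K" "v \<noteq> 0" "c = inner x v / (norm x * norm v)"
      unfolding C_def by blast
    define x' where "x' = x /\<^sub>R norm x"
    define v' where "v' = (c / norm v) *\<^sub>R v"
    have "x' \<in> L" "norm x' = 1" using xv sL by (auto simp: x'_def subspace_scale)
    have "0 \<le> c / norm v" using \<open>0 \<le> c\<close> by simp
    then have "v' \<in> K" using cK xv(3) unfolding cone_def v'_def by blast
    have nv': "norm v' = c" using xv(4) \<open>0 \<le> c\<close> by (simp add: v'_def)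
    have iv: "inner v' x' = c * c" using xv by (simp add: v'_def x'_def inner_commute field_simps)
    have "sqrt (1 - c\<^sup>2) \<in> N" unfolding N_def
      using unit_calc[OF \<open>norm x' = 1\<close> nv' iv] \<open>x' \<in> L\<close> \<open>v' \<in> K\<close> \<open>norm x' = 1\<close> by force
    then show "Inf N \<le> sqrt (1 - c\<^sup>2)" using cInf_lower bddN by blast
  qed
  show ?thesis using LHS RHS lower upper by simp
qed

lemma dual_cone_scale:
  "u \<in> dual_cone K \<Longrightarrow> 0 \<le> c \<Longrightarrow> c *\<^sub>R u \<in> dual_cone K"
  unfolding dual_cone_def by auto

lemma part_b:
  fixes K L :: "'a::euclidean_space set"
  assumes Kne: "dual_cone K - {0} \<noteq> {}" and sL: "subspace L" and Lne: "orthogonal_comp L - {0} \<noteq> {}"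
  shows "nu norm norm K L = sin (sub_cone_angle (orthogonal_comp L) (dual_cone K))"
proof -
  define P where "P = orthogonal_comp L"
  define Q where "Q = dual_cone K"
  have sP: "subspace P" unfolding P_def by (rule subspace_orthogonal_comp)
  define C where "C = {inner x v / (norm x * norm v) | x v. x \<in> P - {0} \<and> v \<in> Q - {0}}"
  have sym: "\<And>x. x \<in> P \<Longrightarrow> -x \<in> P" using sP by (simp add: subspace_neg)
  have Cne: "C \<noteq> {}" using Kne Lne unfolding C_def P_def Q_def by blast
  note AM = angle_main[of P Q, OF sym Cne[unfolded C_def], folded C_def]
  have RHS: "sin (sub_cone_angle P Q) = sqrt (1 - (Sup C)\<^sup>2)"
    unfolding sub_cone_angle_def using AM(1) .
  define N where "N = {norm (y - u) | u y. u \<in> Q \<and> y \<in> P \<and> norm u = 1}"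
  have LHS: "nu norm norm K L = Inf N" unfolding nu_def N_def dual_norm_norm P_def Q_def by simp
  obtain l where l: "l \<in> Q" "l \<noteq> 0" using Kne Q_def by blast
  define x0 where "x0 = l /\<^sub>R norm l"
  have x0: "x0 \<in> Q" "norm x0 = 1" using l by (auto simp: x0_def Q_def dual_cone_scale)
  have P0: "0 \<in> P" using sP by (simp add: subspace_0)
  have n1: "1 \<in> N" unfolding N_def using x0 P0 by (intro CollectI exI[of _ x0] exI[of _ 0]) simp
  have Nne: "N \<noteq> {}" using n1 by blast
  have bddN: "bdd_below N" unfolding N_def by (intro bdd_belowI[of _ 0]) auto
  have t0: "0 \<le> Inf N" using Nne by (intro cInf_greatest) (auto simp: N_def)
  have t1: "Inf N \<le> 1" using cInf_lower[OF n1 bddN] .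
  have lower: "sqrt (1 - (Sup C)\<^sup>2) \<le> Inf N"
  proof (rule cInf_greatest[OF Nne])
    fix n assume "n \<in> N"
    then obtain u y where vx: "u \<in> Q" "y \<in> P" "norm u = 1" "n = norm (y - u)" unfolding N_def by blast
    have "y = 0 \<or> \<bar>inner y u / norm y\<bar> \<le> Sup C"
    proof (cases "y = 0")
      case False
      have "u \<noteq> 0" using vx by auto
      have "inner y u / (norm y * norm u) \<in> C" unfolding C_def using vx False \<open>u \<noteq> 0\<close>
        by (intro CollectI exI[of _ y] exI[of _ u]) auto
      then have "inner y u / norm y \<in> C" using vx by simp
      then show ?thesis using AM(2) by blast
    qed simp
    then show "sqrt (1 - (Sup C)\<^sup>2) \<le> n" using dist_lower[of u y "Sup C"] vx AM(3,4) by simp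
  qed
  have upper: "Inf N \<le> sqrt (1 - (Sup C)\<^sup>2)"
  proof (rule fin_upper[OF Cne t0 _ AM(3) t1])
    show "\<And>c. c \<in> C \<Longrightarrow> \<bar>c\<bar> \<le> 1" using AM(2,4) by fastforce
    fix c assume "c \<in> C" "0 \<le> c"
    then obtain x v where xv: "x \<in> P" "x \<noteq> 0" "v \<in> Q" "v \<noteq> 0" "c = inner x v / (norm x * norm v)"
      unfolding C_def by blast
    define u where "u = v /\<^sub>R norm v"
    define y where "y = (c / norm x) *\<^sub>R x"
    have "u \<in> Q" "norm u = 1" using xv by (auto simp: u_def Q_def dual_cone_scale)
    have "y \<in> P" using sP xv by (simp add: y_def subspace_scale)
    have ny: "norm y = c" using xv(2) \<open>0 \<le> c\<close> by (simp add: y_def)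
    have iy: "inner y u = c * c" using xv by (simp add: y_def u_def field_simps)
    have "sqrt (1 - c\<^sup>2) \<in> N" unfolding N_def
      using unit_calc[OF \<open>norm u = 1\<close> ny iy] \<open>y \<in> P\<close> \<open>u \<in> Q\<close> \<open>norm u = 1\<close> by force
    then show "Inf N \<le> sqrt (1 - c\<^sup>2)" using cInf_lower bddN by blast
  qed
  show ?thesis using LHS RHS lower upper unfolding P_def Q_def by simp
qed

definition ee :: "'a::euclidean_space set \<Rightarrow> 'a \<Rightarrow> real" where
  "ee L2 x = norm (x - orth_proj L2 x) / norm x"

lemma proj_best0:
  fixes L :: "'a::euclidean_space set"
  assumes "subspace L" shows "norm (x - orth_proj L x) \<le> norm x"
  using proj_best[OF assms subspace_0[OF assms], of x] by simp

lemma ee_bounds: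
  fixes L :: "'a::euclidean_space set"
  assumes "subspace L" shows "0 \<le> ee L x" "ee L x \<le> 1"
proof -
  show "0 \<le> ee L x" by (simp add: ee_def)
  show "ee L x \<le> 1"
  proof (cases "x = 0")
    case False then show ?thesis using proj_best0[OF assms, of x] by (simp add: ee_def)
  qed (simp add: ee_def)
qed

lemma inner_inf:
  fixes L2 :: "'a::euclidean_space set"
  assumes s2: "subspace L2" and x: "x \<noteq> 0"
  shows "Inf ((\<lambda>v. norm (x - v) / norm x) ` L2) = ee L2 x"
  unfolding ee_def
proof (rule cInf_eq_minimum)
  show "norm (x - orth_proj L2 x) / norm x \<in> (\<lambda>v. norm (x - v) / norm x) ` L2"
    using proj_props(1)[OF s2] by blast
  fix y assume "y \<in> (\<lambda>v. norm (x - v) / norm x) ` L2"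
  then obtain v where "v \<in> L2" "y = norm (x - v) / norm x" by blast
  then show "norm (x - orth_proj L2 x) / norm x \<le> y"
    using proj_best[OF s2 \<open>v \<in> L2\<close>, of x] by (simp add: divide_right_mono)
qed

lemma sq_ident:
  fixes r a b :: real
  shows "((r - a)\<^sup>2 + b\<^sup>2) * (a\<^sup>2 + b\<^sup>2) - b\<^sup>2 * r\<^sup>2 = (a * r - (a\<^sup>2 + b\<^sup>2))\<^sup>2"
  by (simp add: power2_eq_square algebra_simps)

lemma inner_inf_bar:
  fixes L2 :: "'a::euclidean_space set"
  assumes s2: "subspace L2" and ne: "L2 - {0} \<noteq> {}" and x: "x \<noteq> 0"
  shows "Inf ((\<lambda>v. norm (x - v) / norm v) ` (L2 - {0})) = ee L2 x"
proof (rule cInf_eq_non_empty)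
  show "(\<lambda>v. norm (x - v) / norm v) ` (L2 - {0}) \<noteq> {}" using ne by blast
  define a where "a = orth_proj L2 x"
  define b where "b = x - a"
  have aL: "a \<in> L2" unfolding a_def by (rule proj_props(1)[OF s2])
  have bo: "\<And>w. w \<in> L2 \<Longrightarrow> inner b w = 0" unfolding b_def a_def using proj_props(2)[OF s2] by blast
  have nx: "(norm x)\<^sup>2 = (norm a)\<^sup>2 + (norm b)\<^sup>2" using proj_pyth[OF s2, of x] by (simp add: a_def b_def)
  have nxp: "0 < norm x" using x by simp
  have ee: "ee L2 x = norm b / norm x" by (simp add: ee_def a_def b_def)
  have dist: "(norm (x - v))\<^sup>2 = (norm (a - v))\<^sup>2 + (norm b)\<^sup>2" if "v \<in> L2" for v
  proof -
    have "a - v \<in> L2" using aL that s2 by (simp add: subspace_diff)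
    then have "inner b (a - v) = 0" using bo by blast
    then have "inner (a - v) b = 0" by (simp add: inner_commute)
    then have "(norm ((a - v) + b))\<^sup>2 = (norm (a - v))\<^sup>2 + (norm b)\<^sup>2"
      by (simp add: norm_add_Pythagorean orthogonal_def)
    moreover have "(a - v) + b = x - v" by (simp add: b_def)
    ultimately show ?thesis by simp
  qed
  show "ee L2 x \<le> y" if "y \<in> (\<lambda>v. norm (x - v) / norm v) ` (L2 - {0})" for y
  proof -
    from that obtain v where v: "v \<in> L2" "v \<noteq> 0" "y = norm (x - v) / norm v" by blast
    define r where "r = norm v"
    define \<alpha> where "\<alpha> = norm a"
    define \<beta> where "\<beta> = norm b"
    have rp: "0 < r" using v by (simp add: r_def)
    have "\<bar>r - \<alpha>\<bar> \<le> norm (a - v)" unfolding r_def \<alpha>_def using norm_triangle_ineq3[of v a]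
      by (simp add: norm_minus_commute abs_minus_commute)
    then have "(r - \<alpha>)\<^sup>2 \<le> (norm (a - v))\<^sup>2"
      by (metis abs_ge_zero power2_abs power_mono)
    then have h: "((r - \<alpha>)\<^sup>2 + \<beta>\<^sup>2) * (\<alpha>\<^sup>2 + \<beta>\<^sup>2) \<le> (norm (x - v))\<^sup>2 * (norm x)\<^sup>2"
    proof -
      have "(r - \<alpha>)\<^sup>2 + \<beta>\<^sup>2 \<le> (norm (x - v))\<^sup>2" using dist[OF v(1)] \<open>(r - \<alpha>)\<^sup>2 \<le> _\<close> unfolding \<beta>_def by linarith
      then show ?thesis using nx unfolding \<alpha>_def \<beta>_def by (metis mult_right_mono zero_le_power2)
    qed
    have "0 \<le> (\<alpha> * r - (\<alpha>\<^sup>2 + \<beta>\<^sup>2))\<^sup>2" by simp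
    then have "\<beta>\<^sup>2 * r\<^sup>2 \<le> (norm (x - v))\<^sup>2 * (norm x)\<^sup>2"
      using h sq_ident[of r \<alpha> \<beta>] by linarith
    then have "(\<beta> * r)\<^sup>2 \<le> (norm (x - v) * norm x)\<^sup>2"
      by (simp add: power_mult_distrib)
    then have "\<beta> * r \<le> norm (x - v) * norm x" by (rule power2_le_imp_le) simp
    then have "\<beta> / norm x \<le> norm (x - v) / r" using rp nxp by (simp add: divide_simps mult.commute)
    then show ?thesis using ee v by (simp add: \<beta>_def r_def)
  qed
  fix y assume H: "\<And>z. z \<in> (\<lambda>v. norm (x - v) / norm v) ` (L2 - {0}) \<Longrightarrow> y \<le> z"
  show "y \<le> ee L2 x"
  proof (cases "a = 0")
    case False
    define N where "N = (norm x)\<^sup>2"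
    define t where "t = N / (norm a)\<^sup>2"
    define v where "v = t *\<^sub>R a"
    have ap: "0 < norm a" using False by simp
    have tpos: "0 < t" using nxp ap by (simp add: t_def N_def)
    have ta: "t * (norm a)\<^sup>2 = N" using ap by (simp add: t_def)
    have vL: "v \<in> L2" "v \<noteq> 0" using aL False tpos s2 by (auto simp: v_def subspace_scale)
    have nv: "norm v = t * norm a" using tpos by (simp add: v_def)
    have "a - v = (1 - t) *\<^sub>R a" by (simp add: v_def algebra_simps)
    then have "(norm (a - v))\<^sup>2 = (1 - t)\<^sup>2 * (norm a)\<^sup>2" by (simp add: power_mult_distrib)
    then have dxv: "(norm (x - v))\<^sup>2 = (1 - t)\<^sup>2 * (norm a)\<^sup>2 + (norm b)\<^sup>2" using dist[OF vL(1)] by simp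
    have key: "(norm (x - v))\<^sup>2 * N = (norm b)\<^sup>2 * (norm v)\<^sup>2"
    proof -
      have "(1 - t)\<^sup>2 * (norm a)\<^sup>2 + (norm b)\<^sup>2 = N * (t - 1)"
        using ta nx unfolding N_def by (simp add: power2_eq_square algebra_simps)
      moreover have "N * (t - 1) = (norm b)\<^sup>2 * t"
        using ta nx unfolding N_def by (simp add: power2_eq_square algebra_simps)
      ultimately have "(norm (x - v))\<^sup>2 * N = (norm b)\<^sup>2 * t * N" using dxv by simp
      also have "\<dots> = (norm b)\<^sup>2 * (norm v)\<^sup>2" using ta nv by (simp add: power2_eq_square algebra_simps)
      finally show ?thesis .
    qed
    have "(norm (x - v) / norm v)\<^sup>2 = (norm b / norm x)\<^sup>2"
      using key vL nxp by (simp add: power_divide N_def field_simps)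
    then have "norm (x - v) / norm v = norm b / norm x" by (rule power2_eq_imp_eq) auto
    moreover have "y \<le> norm (x - v) / norm v" using H vL by blast
    ultimately show ?thesis using ee by simp
  next
    case True
    then have bx: "b = x" by (simp add: b_def)
    then have ee1: "ee L2 x = 1" using ee nxp by simp
    obtain w where w: "w \<in> L2" "w \<noteq> 0" using ne by blast
    have bnd: "y \<le> 1 + norm x / r" if "0 < r" for r
    proof -
      define v where "v = (r / norm w) *\<^sub>R w"
      have vL: "v \<in> L2" "v \<noteq> 0" using w that s2 by (auto simp: v_def subspace_scale)
      have nv: "norm v = r" using w that by (simp add: v_def)
      have "norm (x - v) \<le> norm x + r" using norm_triangle_ineq4[of x v] nv by simp
      then have "norm (x - v) / norm v \<le> (norm x + r) / r" using nv that by (simp add: divide_right_mono)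
      also have "\<dots> = 1 + norm x / r" using that by (simp add: field_simps)
      finally show ?thesis using H vL by force
    qed
    show ?thesis
    proof (rule ccontr)
      assume "\<not> y \<le> ee L2 x"
      then have y1: "1 < y" using ee1 by simp
      define r where "r = 2 * norm x / (y - 1)"
      have rp: "0 < r" using y1 nxp by (simp add: r_def)
      have "norm x / r = (y - 1) / 2" using y1 nxp by (simp add: r_def field_simps)
      then show False using bnd[OF rp] y1 by simp
    qed
  qed
qed

lemma D_props:
  fixes L1 L2 :: "'a::euclidean_space set"
  assumes s1: "subspace L1" and s2: "subspace L2" and ne: "L1 - {0} \<noteq> {}"
  shows "0 \<le> Sup (ee L2 ` (L1 - {0}))" "Sup (ee L2 ` (L1 - {0})) \<le> 1"
    "\<And>x. x \<in> L1 \<Longrightarrow> norm (x - orth_proj L2 x) \<le> Sup (ee L2 ` (L1 - {0})) * norm x"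
proof -
  let ?D = "Sup (ee L2 ` (L1 - {0}))"
  have bdd: "bdd_above (ee L2 ` (L1 - {0}))" using ee_bounds(2)[OF s2] by (intro bdd_aboveI[of _ 1]) auto
  obtain x0 where x0: "x0 \<in> L1 - {0}" using ne by blast
  show "0 \<le> ?D" using ee_bounds(1)[OF s2, of x0] cSup_upper[OF imageI[OF x0] bdd] by linarith
  show "?D \<le> 1" using ne ee_bounds(2)[OF s2] by (intro cSup_least) auto
  fix x assume x: "x \<in> L1"
  show "norm (x - orth_proj L2 x) \<le> ?D * norm x"
  proof (cases "x = 0")
    case True
    have "orth_proj L2 0 = 0" using proj_linear[OF s2] by (simp add: linear_0)
    then show ?thesis using True by simp
  next
    case False
    have "ee L2 x \<le> ?D" using x False by (intro cSup_upper[OF _ bdd]) auto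
    then have "ee L2 x * norm x \<le> ?D * norm x" by (simp add: mult_right_mono)
    then show ?thesis using False by (simp add: ee_def)
  qed
qed

lemma D_swap:
  fixes L1 L2 :: "'a::euclidean_space set"
  assumes s1: "subspace L1" and s2: "subspace L2" and ne: "L1 - {0} \<noteq> {}" and dm: "dim L1 = dim L2"
    and y: "y \<in> L2"
  shows "norm (y - orth_proj L1 y) \<le> Sup (ee L2 ` (L1 - {0})) * norm y"
proof -
  define d where "d = Sup (ee L2 ` (L1 - {0}))"
  note DP = D_props[OF s1 s2 ne, folded d_def]
  let ?P1 = "orth_proj L1" and ?P2 = "orth_proj L2"
  show ?thesis
  proof (cases "1 \<le> d")
    case True
    have "norm (y - ?P1 y) \<le> norm y" by (rule proj_best0[OF s1])
    also have "\<dots> \<le> d * norm y" using True mult_right_mono[OF True norm_ge_zero[of y]] by simp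
    finally show ?thesis unfolding d_def .
  next
    case False
    define s where "s = 1 - d\<^sup>2"
    have "d * d \<le> d" using DP(1) False by (intro mult_left_le_one_le) auto
    then have sp: "0 < s" using False by (simp add: s_def power2_eq_square)
    have low: "s * (norm x)\<^sup>2 \<le> (norm (?P2 x))\<^sup>2" if "x \<in> L1" for x
    proof -
      have "(norm (x - ?P2 x))\<^sup>2 \<le> (d * norm x)\<^sup>2" using DP(3)[OF that] by (intro power_mono) auto
      then show ?thesis using proj_pyth[OF s2, of x] by (simp add: s_def power_mult_distrib algebra_simps)
    qed
    have lin2: "linear ?P2" by (rule proj_linear[OF s2])
    have inj: "inj_on ?P2 L1"
    proof (rule inj_onI)
      fix x x' assume "x \<in> L1" "x' \<in> L1" "?P2 x = ?P2 x'"
      then have "x - x' \<in> L1" "?P2 (x - x') = 0" using s1 lin2 by (auto simp: subspace_diff linear_diff)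
      then have "s * (norm (x - x'))\<^sup>2 \<le> 0" using low by fastforce
      then have "norm (x - x') = 0" using sp by (simp add: mult_le_0_iff)
      then show "x = x'" by simp
    qed
    have "span L1 = L1" using s1 by simp
    then have "inj_on ?P2 (span L1)" using inj by (simp only:)
    then have "dim (?P2 ` L1) = dim L1" by (rule dim_image_eq[OF lin2])
    moreover have "subspace (?P2 ` L1)" using linear_subspace_image[OF lin2 s1] .
    moreover have "?P2 ` L1 \<subseteq> L2" using proj_props(1)[OF s2] by blast
    ultimately have img: "?P2 ` L1 = L2" using subspace_dim_equal[of "?P2 ` L1" L2] s2 dm by (metis order_refl)
    have "y \<in> ?P2 ` L1" using y img by simp
    then obtain x where x: "x \<in> L1" "?P2 x = y" by (auto elim!: imageE)
    define Y where "Y = (norm y)\<^sup>2"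
    define X where "X = (norm x)\<^sup>2"
    define Q where "Q = (norm (?P1 y))\<^sup>2"
    have "Y = inner (?P2 x) y" using x by (simp add: Y_def power2_norm_eq_inner)
    also have "\<dots> = inner x (?P2 y)" by (rule proj_selfadj[OF s2])
    also have "\<dots> = inner (?P1 x) y" using proj_id[OF s2 y] proj_id[OF s1 x(1)] by simp
    also have "\<dots> = inner x (?P1 y)" by (rule proj_selfadj[OF s1])
    also have "\<dots> \<le> norm x * norm (?P1 y)" by (rule norm_cauchy_schwarz)
    finally have Yle: "Y \<le> norm x * norm (?P1 y)" .
    have Y0: "0 \<le> Y" by (simp add: Y_def)
    have "Y\<^sup>2 \<le> (norm x * norm (?P1 y))\<^sup>2" using Yle Y0 by (intro power_mono) auto
    then have YY: "Y\<^sup>2 \<le> X * Q" by (simp add: X_def Q_def power_mult_distrib)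
    have sX: "s * X \<le> Y" using low[OF x(1)] x(2) by (simp add: X_def Y_def)
    have "s * Y\<^sup>2 \<le> s * (X * Q)" using YY sp by simp
    also have "\<dots> = (s * X) * Q" by simp
    also have "\<dots> \<le> Y * Q" using sX by (intro mult_right_mono) (auto simp: Q_def)
    finally have sYQ: "s * Y\<^sup>2 \<le> Y * Q" .
    have sYle: "s * Y \<le> Q"
    proof (cases "Y = 0")
      case True then show ?thesis by (simp add: Q_def)
    next
      case False
      then have "0 < Y" using Y0 by simp
      have "(s * Y) * Y \<le> Q * Y" using sYQ by (simp add: power2_eq_square ac_simps)
      then show ?thesis using mult_right_le_imp_le[of "s * Y" Y Q] \<open>0 < Y\<close> by simp
    qed
    have "(norm (y - ?P1 y))\<^sup>2 = Y - Q" using proj_pyth[OF s1, of y] by (simp add: Y_def Q_def)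
    also have "\<dots> \<le> d\<^sup>2 * Y" using sYle by (simp add: s_def algebra_simps)
    also have "\<dots> = (d * norm y)\<^sup>2" by (simp add: Y_def power_mult_distrib)
    finally have "(norm (y - ?P1 y))\<^sup>2 \<le> (d * norm y)\<^sup>2" .
    then show ?thesis unfolding d_def[symmetric] by (rule power2_le_imp_le) (use DP(1) in simp)
  qed
qed

lemma opnorm:
  fixes L1 L2 :: "'a::euclidean_space set"
  assumes s1: "subspace L1" and s2: "subspace L2" and ne1: "L1 - {0} \<noteq> {}" and ne2: "L2 - {0} \<noteq> {}"
    and dm: "dim L1 = dim L2"
  shows "op_norm2 (\<lambda>x. orth_proj L1 x - orth_proj L2 x) = Sup (ee L2 ` (L1 - {0}))"
proof -
  define d where "d = Sup (ee L2 ` (L1 - {0}))"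
  define d' where "d' = Sup (ee L1 ` (L2 - {0}))"
  let ?P1 = "orth_proj L1" and ?P2 = "orth_proj L2"
  let ?f = "\<lambda>x. orth_proj L1 x - orth_proj L2 x"
  note DP = D_props[OF s1 s2 ne1, folded d_def]
  note DP' = D_props[OF s2 s1 ne2, folded d'_def]
  have "d' \<le> d" unfolding d'_def
  proof (rule cSup_least)
    show "ee L1 ` (L2 - {0}) \<noteq> {}" using ne2 by blast
    fix r assume "r \<in> ee L1 ` (L2 - {0})"
    then obtain y where y: "y \<in> L2" "y \<noteq> 0" "r = ee L1 y" by blast
    have "norm (y - ?P1 y) \<le> d * norm y" using D_swap[OF s1 s2 ne1 dm y(1)] by (simp add: d_def)
    moreover have "0 < norm y" using y by simp
    ultimately show "r \<le> d" using y(3) by (simp add: ee_def pos_divide_le_eq)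
  qed
  moreover have "d \<le> d'" unfolding d_def
  proof (rule cSup_least)
    show "ee L2 ` (L1 - {0}) \<noteq> {}" using ne1 by blast
    fix r assume "r \<in> ee L2 ` (L1 - {0})"
    then obtain y where y: "y \<in> L1" "y \<noteq> 0" "r = ee L2 y" by blast
    have "norm (y - ?P2 y) \<le> d' * norm y" using D_swap[OF s2 s1 ne2 dm[symmetric] y(1)] by (simp add: d'_def)
    moreover have "0 < norm y" using y by simp
    ultimately show "r \<le> d'" using y(3) by (simp add: ee_def pos_divide_le_eq)
  qed
  ultimately have dd: "d' = d" by simp
  have B1: "norm (x - ?P2 x) \<le> d * norm x" if "x \<in> L1" for x using DP(3)[OF that] .
  have B2: "norm (y - ?P1 y) \<le> d * norm y" if "y \<in> L2" for y using DP'(3)[OF that] dd by simp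
  have d0: "0 \<le> d" using DP(1) .
  have lin1: "linear ?P1" by (rule proj_linear[OF s1])
  have lin2: "linear ?P2" by (rule proj_linear[OF s2])
  define S where "S = {norm (?f x) | x. norm x = 1}"
  have up: "z \<le> d" if "z \<in> S" for z
  proof -
    from that obtain x where x: "norm x = 1" "z = norm (?f x)" unfolding S_def by blast
    define p where "p = ?P1 x"
    define q where "q = x - p"
    define u where "u = p - ?P2 p"
    define w where "w = ?P2 q"
    have pL: "p \<in> L1" unfolding p_def by (rule proj_props(1)[OF s1])
    have wL: "w \<in> L2" unfolding w_def by (rule proj_props(1)[OF s2])
    have fx: "?f x = u - w" unfolding u_def w_def q_def p_def using lin2 by (simp add: linear_diff)
    have uw: "inner u w = 0" unfolding u_def using proj_props(2)[OF s2 wL, of p] .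
    have nu: "norm u \<le> d * norm p" unfolding u_def by (rule B1[OF pL])
    have P1q: "?P1 q = 0" unfolding q_def p_def using lin1 proj_id[OF s1 pL] by (simp add: linear_diff p_def)
    have ww: "inner w w = inner q w"
    proof -
      have "inner w w = inner q (?P2 w)" unfolding w_def by (rule proj_selfadj[OF s2])
      then show ?thesis using proj_id[OF s2 wL] by simp
    qed
    have "inner q (?P1 w) = inner (?P1 q) w" by (rule proj_selfadj[OF s1, symmetric])
    then have q1: "inner q (?P1 w) = 0" using P1q by simp
    have "inner q w = inner q (w - ?P1 w)" using q1 by (simp add: inner_diff_right)
    also have "\<dots> \<le> norm q * norm (w - ?P1 w)" by (rule norm_cauchy_schwarz)
    also have "\<dots> \<le> norm q * (d * norm w)" using B2[OF wL] by (intro mult_left_mono) auto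
    finally have "inner w w \<le> norm q * (d * norm w)" using ww by simp
    then have "(norm w)\<^sup>2 \<le> norm q * (d * norm w)" by (simp only: dot_square_norm)
    then have "norm w * norm w \<le> (d * norm q) * norm w" by (simp add: power2_eq_square ac_simps)
    then have nw: "norm w \<le> d * norm q"
    proof (cases "w = 0")
      case True then show ?thesis using d0 by simp
    next
      case False
      have "0 < norm w" using False by simp
      with \<open>norm w * norm w \<le> (d * norm q) * norm w\<close> show ?thesis
        by (rule mult_right_le_imp_le)
    qed
    have "norm (?f x) = norm (u - w)" using fx by simp
    moreover have "(norm (u - w))\<^sup>2 = (norm u)\<^sup>2 + (norm w)\<^sup>2"
    proof -
      have "orthogonal u (-w)" using uw by (simp add: orthogonal_def)
      then have "(norm (u + -w))\<^sup>2 = (norm u)\<^sup>2 + (norm (-w))\<^sup>2" by (rule norm_add_Pythagorean)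
      then show ?thesis by simp
    qed
    ultimately have fx2: "(norm (?f x))\<^sup>2 = (norm u)\<^sup>2 + (norm w)\<^sup>2" by simp
    have "(norm u)\<^sup>2 \<le> (d * norm p)\<^sup>2" using nu by (intro power_mono) auto
    moreover have "(norm w)\<^sup>2 \<le> (d * norm q)\<^sup>2" using nw by (intro power_mono) auto
    moreover have "(norm p)\<^sup>2 + (norm q)\<^sup>2 = 1" using proj_pyth[OF s1, of x] x(1) by (simp add: p_def q_def)
    ultimately have A: "(norm u)\<^sup>2 \<le> d\<^sup>2 * (norm p)\<^sup>2" "(norm w)\<^sup>2 \<le> d\<^sup>2 * (norm q)\<^sup>2"
      "(norm p)\<^sup>2 + (norm q)\<^sup>2 = 1" by (simp_all add: power_mult_distrib)
    have "d\<^sup>2 * (norm p)\<^sup>2 + d\<^sup>2 * (norm q)\<^sup>2 = d\<^sup>2 * ((norm p)\<^sup>2 + (norm q)\<^sup>2)"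
      by (simp add: distrib_left)
    also have "\<dots> = d\<^sup>2" using A(3) by simp
    finally have "(norm (?f x))\<^sup>2 \<le> d\<^sup>2" using A(1,2) fx2 by linarith
    then have "norm (?f x) \<le> d" by (rule power2_le_imp_le) (use d0 in simp)
    then show ?thesis using x(2) by simp
  qed
  obtain b :: 'a where b: "b \<in> Basis" using nonempty_Basis by blast
  have "norm b = 1" using b by simp
  then have "norm (?f b) \<in> S" unfolding S_def by blast
  then have Sne: "S \<noteq> {}" by blast
  have bddS: "bdd_above S" using up by (intro bdd_aboveI) auto
  have le1: "Sup S \<le> d" using Sne up by (intro cSup_least) auto
  have le2: "d \<le> Sup S" unfolding d_def
  proof (rule cSup_least)
    show "ee L2 ` (L1 - {0}) \<noteq> {}" using ne1 by blast
    fix r assume "r \<in> ee L2 ` (L1 - {0})"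
    then obtain x where x: "x \<in> L1" "x \<noteq> 0" "r = ee L2 x" by blast
    define x' where "x' = (1 / norm x) *\<^sub>R x"
    have x'L: "x' \<in> L1" using x s1 by (simp add: x'_def subspace_scale)
    have p2: "?P2 x' = (1 / norm x) *\<^sub>R ?P2 x" unfolding x'_def by (rule linear_cmul[OF lin2])
    have "?f x' = (1 / norm x) *\<^sub>R (x - ?P2 x)"
      unfolding proj_id[OF s1 x'L] p2 by (simp add: x'_def scaleR_diff_right)
    then have "norm (?f x') = norm (x - ?P2 x) / norm x" by simp
    then have "norm (?f x') = r" using x(3) by (simp add: ee_def)
    moreover have "norm x' = 1" using x(2) by (simp add: x'_def)
    ultimately have "r \<in> S" unfolding S_def by blast
    then show "r \<le> Sup S" using bddS by (rule cSup_upper)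
  qed
  have "op_norm2 ?f = Sup S" by (simp add: op_norm2_def S_def)
  then show ?thesis using le1 le2 d_def by simp
qed

lemma Gr_nonzero:
  fixes L :: "'a::euclidean_space set"
  assumes "L \<in> Gr m" "1 \<le> m" shows "subspace L" "L - {0} \<noteq> {}" "dim L = m"
proof -
  show "subspace L" "dim L = m" using assms by (auto simp: Gr_def)
  show "L - {0} \<noteq> {}"
  proof
    assume "L - {0} = {}"
    then have "L \<subseteq> {0}" by blast
    then have "dim L = 0" by simp
    moreover have "dim L = m" using assms by (simp add: Gr_def)
    ultimately show False using assms(2) by linarith
  qed
qed

lemma Gr_perp_nonzero:
  fixes L :: "'a::euclidean_space set"
  assumes "L \<in> Gr m" "m < DIM('a)" shows "orthogonal_comp L - {0} \<noteq> {}"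
proof
  assume H: "orthogonal_comp L - {0} = {}"
  have sL: "subspace L" using assms by (simp add: Gr_def)
  have "v \<in> L" for v
  proof -
    have "v \<in> L + orthogonal_comp L" using subspace_sum_orthogonal_comp[OF sL] by simp
    then obtain a b where "a \<in> L" "b \<in> orthogonal_comp L" "v = a + b" by (meson set_plus_elim)
    then show ?thesis using H by auto
  qed
  then have "L = UNIV" by blast
  then have "dim L = DIM('a)" by simp
  then show False using assms by (simp add: Gr_def)
qed

lemma regular_facts:
  fixes K :: "'a::euclidean_space set"
  assumes "regular_cone K"
  shows "K - {0} \<noteq> {}" "dual_cone K - {0} \<noteq> {}"
proof -
  have cl: "closed K" and cv: "convex K" and cK: "cone K" and int: "interior K \<noteq> {}"
    and pt: "K \<inter> uminus ` K = {0}" using assms by (auto simp: regular_cone_def)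
  obtain p where "p \<in> interior K" using int by blast
  then obtain e where e: "0 < e" "ball p e \<subseteq> K" using mem_interior by blast
  obtain b :: 'a where b: "b \<in> Basis" using nonempty_Basis by blast
  define q where "q = p + (e / 2) *\<^sub>R b"
  have "dist p q < e" using e b by (simp add: q_def dist_norm)
  then have qK: "q \<in> K" using e by auto
  have pK: "p \<in> K" using e by auto
  have "p \<noteq> q" using e b by (auto simp: q_def)
  then obtain k where k: "k \<in> K" "k \<noteq> 0" using pK qK by metis
  show "K - {0} \<noteq> {}" using k by blast
  have K0: "0 \<in> K" using cK k unfolding cone_def by (metis scaleR_zero_left order_refl)
  have "- k \<notin> K"
  proof
    assume "- k \<in> K"
    moreover have "- k \<in> uminus ` K" using k by blast
    ultimately have "- k \<in> {0}" using pt by blast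
    then show False using k by simp
  qed
  then obtain a c where ac: "inner a (- k) < c" "\<forall>x\<in>K. c < inner a x"
    using separating_hyperplane_closed_point[OF cv cl] by blast
  have c0: "c < 0" using ac(2) K0 by force
  have "0 \<le> inner a x" if "x \<in> K" for x
  proof (rule ccontr)
    assume "\<not> 0 \<le> inner a x"
    then have neg: "inner a x < 0" by simp
    define t where "t = c / inner a x"
    have "0 \<le> t" using neg c0 by (simp add: t_def divide_nonpos_neg)
    then have "t *\<^sub>R x \<in> K" using cK that unfolding cone_def by blast
    then have "c < inner a (t *\<^sub>R x)" using ac(2) by blast
    moreover have "inner a (t *\<^sub>R x) = c" using neg by (simp add: t_def)
    ultimately show False by simp
  qed
  then have "a \<in> dual_cone K" by (simp add: dual_cone_def)
  moreover have "a \<noteq> 0" using ac(1) c0 by auto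
  ultimately show "dual_cone K - {0} \<noteq> {}" by blast
qed

theorem mainTheorem6:
  fixes K :: "'a::euclidean_space set" and m :: nat
  assumes "regular_cone K" and "1 \<le> m" and "m < DIM('a)"
  shows "(\<forall>L1 \<in> (Gr m :: 'a set set). \<forall>L2 \<in> (Gr m :: 'a set set).
            op_norm2 (\<lambda>x. orth_proj L1 x - orth_proj L2 x) = sdist norm norm L1 L2
          \<and> sdist norm norm L1 L2 = sdist_bar norm norm L1 L2)
       \<and> (\<forall>L \<in> Gr m. L \<inter> interior K \<noteq> {} \<longrightarrow>
            nu norm norm K L = sin (sub_cone_angle (orthogonal_comp L) (dual_cone K)))
       \<and> (\<forall>L \<in> Gr m. orthogonal_comp L \<inter> interior (dual_cone K) \<noteq> {} \<longrightarrow>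
            nu_bar norm norm K L = sin (sub_cone_angle L K))"
proof (intro conjI ballI impI)
  fix L1 L2 :: "'a set" assume L1: "L1 \<in> Gr m" and L2: "L2 \<in> Gr m"
  note G1 = Gr_nonzero[OF L1 assms(2)] and G2 = Gr_nonzero[OF L2 assms(2)]
  have sd: "sdist norm norm L1 L2 = Sup (ee L2 ` (L1 - {0}))"
    unfolding sdist_def by (rule arg_cong[where f=Sup], rule image_cong) (auto intro: inner_inf[OF G2(1)])
  have sdb: "sdist_bar norm norm L1 L2 = Sup (ee L2 ` (L1 - {0}))"
    unfolding sdist_bar_def by (rule arg_cong[where f=Sup], rule image_cong) (auto intro: inner_inf_bar[OF G2(1) G2(2)])
  show "op_norm2 (\<lambda>x. orth_proj L1 x - orth_proj L2 x) = sdist norm norm L1 L2"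
    unfolding sd using opnorm[OF G1(1) G2(1) G1(2) G2(2)] G1(3) G2(3) by simp
  show "sdist norm norm L1 L2 = sdist_bar norm norm L1 L2" using sd sdb by simp
next
  fix L :: "'a set" assume L: "L \<in> Gr m"
  show "nu norm norm K L = sin (sub_cone_angle (orthogonal_comp L) (dual_cone K))"
    using part_b[OF regular_facts(2)[OF assms(1)] Gr_nonzero(1)[OF L assms(2)] Gr_perp_nonzero[OF L assms(3)]] .
next
  fix L :: "'a set" assume L: "L \<in> Gr m"
  have "cone K" using assms(1) by (simp add: regular_cone_def)
  then show "nu_bar norm norm K L = sin (sub_cone_angle L K)"
    using part_c[OF _ regular_facts(1)[OF assms(1)] Gr_nonzero(1,2)[OF L assms(2)]] by blast
qed

end
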